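(* Let $r>0$, $0<p<1$, $q=1-p$, and $X\sim\mathcal{UNB}(r,p)$. Then $$\mathbb{E}(X)=\frac{rq}{2p},\qquad \mathbb{V}(X)=\frac{rq}{12p}\left(6+\frac{4q}{p}+\frac{rq}{p}\right),$$ and the index of dispersion satisfies $\frac{\mathbb{V}(X)}{\mathbb{E}(X)}=1+\frac{4q}{6p}+\frac{rq}{6p}>1$, so $X$ is always overdispersed.
   Context: $\mathcal{UNB}(r,p)$ is the law of $X$ where $N$ is negative binomial with $P(N=n)=\binom{r+n-1}{n}p^rq^n=\frac{\Gamma(r+n)}{n!\Gamma(r)}p^rq^n$, $n\ge0$, and conditionally on $N=n$, $X$ is uniform on $\{0,1,\dots,n\}$. *)

theory Defs
  imports "HOL-Probability.Probability"
begin

definition nb_mass :: "real \<Rightarrow> real \<Rightarrow> nat \<Rightarrow> real" where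
  "nb_mass r p n = Gamma (r + real n) / (fact n * Gamma r) * p powr r * (1 - p) ^ n"

definition neg_binomial_pmf :: "real \<Rightarrow> real \<Rightarrow> nat pmf" where
  "neg_binomial_pmf r p = embed_pmf (nb_mass r p)"

definition unb_pmf :: "real \<Rightarrow> real \<Rightarrow> nat pmf" where
  "unb_pmf r p = bind_pmf (neg_binomial_pmf r p) (\<lambda>n. pmf_of_set {0..n})"

end

theory Submission
  imports Defs
begin

lemma gser:
  fixes q r :: real
  assumes "0 \<le> q" "q < 1"
  shows "(\<lambda>n. pochhammer r n / fact n * q ^ n) sums ((1 - q) powr (- r))"
proof -
  have "(\<lambda>n. ((- r) gchoose n) * (- q) ^ n) sums (1 + (- q)) powr (- r)"
    by (rule gen_binomial_real) (use assms in auto)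
  moreover have "((- r) gchoose n) * (- q) ^ n = pochhammer r n / fact n * q ^ n" for n
  proof -
    have "((- r) gchoose n) * (- q) ^ n = ((-1)^n * (-1)^n) * (pochhammer r n / fact n * q ^ n)"
      by (simp add: gbinomial_pochhammer power_minus[of q])
    also have "(-1::real)^n * (-1)^n = 1" by (simp add: power_mult_distrib[symmetric])
    finally show ?thesis by simp
  qed
  ultimately show ?thesis by simp
qed

lemma shift0:
  fixes f :: "nat \<Rightarrow> real"
  assumes "f 0 = 0" "(\<lambda>n. f (Suc n)) sums s"
  shows "f sums s"
  using assms sums_Suc_iff[of f s] by simp

lemma shift1:
  fixes q r :: real
  assumes "0 \<le> q" "q < 1"
  shows "(\<lambda>n. real n * (pochhammer r n / fact n * q ^ n)) sums (r * q * (1 - q) powr (- (r + 1)))"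
proof (rule shift0)
  have "(\<lambda>m. r * q * (pochhammer (r+1) m / fact m * q ^ m)) sums (r * q * (1 - q) powr (- (r + 1)))"
    by (intro sums_mult gser assms)
  moreover have "real (Suc m) * (pochhammer r (Suc m) / fact (Suc m) * q ^ Suc m)
      = r * q * (pochhammer (r+1) m / fact m * q ^ m)" for m
  proof -
    have "real (Suc m) * (pochhammer r (Suc m) / fact (Suc m) * q ^ Suc m) = (real (Suc m) / real (Suc m)) * (r * q * (pochhammer (r+1) m / fact m * (q::real) ^ m))"
      unfolding pochhammer_rec fact_Suc of_nat_mult power_Suc by (simp only: times_divide_eq_left times_divide_eq_right divide_divide_eq_left mult_ac)
    then show ?thesis by simp
  qed
  ultimately show "(\<lambda>m. real (Suc m) * (pochhammer r (Suc m) / fact (Suc m) * q ^ Suc m)) sums (r * q * (1 - q) powr (- (r + 1)))"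
    by (simp only:)
qed simp

lemma shift2:
  fixes q r :: real
  assumes "0 \<le> q" "q < 1"
  shows "(\<lambda>n. real n * (real n - 1) * (pochhammer r n / fact n * q ^ n)) sums (r * q * ((r + 1) * q * (1 - q) powr (- (r + 2))))"
proof (rule shift0)
  have "(\<lambda>m. r * q * (real m * (pochhammer (r+1) m / fact m * q ^ m))) sums (r * q * ((r + 1) * q * (1 - q) powr (- (r + 1 + 1))))"
    by (intro sums_mult shift1 assms)
  moreover have "real (Suc m) * (real (Suc m) - 1) * (pochhammer r (Suc m) / fact (Suc m) * q ^ Suc m)
      = r * q * (real m * (pochhammer (r+1) m / fact m * q ^ m))" for m
  proof -
    have "real (Suc m) * real m * (pochhammer r (Suc m) / fact (Suc m) * q ^ Suc m) = (real (Suc m) / real (Suc m)) * (r * q * (real m * (pochhammer (r+1) m / fact m * (q::real) ^ m)))"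
      unfolding pochhammer_rec fact_Suc of_nat_mult power_Suc by (simp only: times_divide_eq_left times_divide_eq_right divide_divide_eq_left mult_ac)
    moreover have "real (Suc m) - 1 = real m" by simp
    ultimately show ?thesis by simp
  qed
  moreover have "r + 1 + 1 = r + 2" by simp
  ultimately show "(\<lambda>m. real (Suc m) * (real (Suc m) - 1) * (pochhammer r (Suc m) / fact (Suc m) * q ^ Suc m)) sums (r * q * ((r + 1) * q * (1 - q) powr (- (r + 2))))"
    by (simp only:)
qed simp

lemma nb_eq:
  assumes "r > 0"
  shows "nb_mass r p n = p powr r * (pochhammer r n / fact n * (1 - p) ^ n)"
proof -
  have "r \<notin> \<int>\<^sub>\<le>\<^sub>0" using assms nonpos_Ints_nonpos by fastforce
  then have "pochhammer r n = Gamma (r + real n) / Gamma r" by (rule pochhammer_Gamma)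
  moreover have "Gamma r > 0" using assms by (rule Gamma_real_pos)
  ultimately show ?thesis unfolding nb_mass_def by (simp add: field_simps)
qed

lemma nb_sums:
  fixes r p :: real
  assumes r: "r > 0" and p: "0 < p" "p < 1"
  shows "nb_mass r p sums 1"
    and "(\<lambda>n. real n * nb_mass r p n) sums (r * (1 - p) / p)"
    and "(\<lambda>n. real n * (real n - 1) * nb_mass r p n) sums (r * (r + 1) * (1 - p)^2 / p^2)"
proof -
  have q: "0 \<le> 1 - p" "1 - p < 1" using p by auto
  have e1: "p powr r * p powr (- r) = 1" using p by (simp add: powr_minus)
  have e2: "p powr r * p powr (- (r + 1)) = 1 / p"
  proof -
    have "p powr r * p powr (- (r + 1)) = p powr (r + (- (r + 1)))" by (rule powr_add[symmetric])
    also have "\<dots> = p powr (- 1)" by simp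
    also have "\<dots> = 1 / p" using p by (simp add: powr_minus_divide abs_of_pos)
    finally show ?thesis .
  qed
  have e3: "p powr r * p powr (- (r + 2)) = 1 / p^2"
  proof -
    have "p powr r * p powr (- (r + 2)) = p powr (r + (- (r + 2)))" by (rule powr_add[symmetric])
    also have "\<dots> = inverse (p powr 2)" by (simp add: powr_minus)
    also have "\<dots> = 1 / p^2" using p by (simp add: powr_realpow divide_inverse)
    finally show ?thesis .
  qed
  have "(\<lambda>n. p powr r * (pochhammer r n / fact n * (1 - p) ^ n)) sums (p powr r * (1 - (1 - p)) powr (- r))"
    by (intro sums_mult gser q)
  moreover have nbf: "nb_mass r p = (\<lambda>n. p powr r * (pochhammer r n / fact n * (1 - p) ^ n))"
    by (rule ext, rule nb_eq[OF r])
  ultimately show "nb_mass r p sums 1" using e1 by simp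
  have "(\<lambda>n. p powr r * (real n * (pochhammer r n / fact n * (1 - p) ^ n))) sums (p powr r * (r * (1 - p) * (1 - (1 - p)) powr (- (r + 1))))"
    by (intro sums_mult shift1 q)
  moreover have "p powr r * (r * (1 - p) * (1 - (1 - p)) powr (- (r + 1))) = r * (1 - p) / p"
    using e2 by (simp add: field_simps)
  ultimately show "(\<lambda>n. real n * nb_mass r p n) sums (r * (1 - p) / p)"
    by (simp add: nb_eq[OF r] mult.left_commute)
  have "(\<lambda>n. p powr r * (real n * (real n - 1) * (pochhammer r n / fact n * (1 - p) ^ n))) sums (p powr r * (r * (1 - p) * ((r + 1) * (1 - p) * (1 - (1 - p)) powr (- (r + 2)))))"
    by (intro sums_mult shift2 q)
  moreover have "p powr r * (r * (1 - p) * ((r + 1) * (1 - p) * (1 - (1 - p)) powr (- (r + 2)))) = r * (r + 1) * (1 - p)^2 / p^2"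
    using e3 by (simp add: field_simps power2_eq_square)
  ultimately show "(\<lambda>n. real n * (real n - 1) * nb_mass r p n) sums (r * (r + 1) * (1 - p)^2 / p^2)"
    by (simp add: nb_eq[OF r] mult.left_commute)
qed

lemma nb_nonneg:
  assumes "r > 0" "0 < p" "p < 1"
  shows "0 \<le> nb_mass r p n"
  using assms by (simp add: nb_eq pochhammer_nonneg)

lemma pmf_nb:
  assumes "r > 0" "0 < p" "p < 1"
  shows "pmf (neg_binomial_pmf r p) n = nb_mass r p n"
proof -
  have "(\<integral>\<^sup>+x. ennreal (nb_mass r p x) \<partial>count_space UNIV) = 1"
    using nb_sums(1)[OF assms] nb_nonneg[OF assms]
    by (simp add: nn_integral_count_space_nat suminf_ennreal2 sums_summable sums_unique[symmetric])
  then show ?thesis unfolding neg_binomial_pmf_def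
    by (subst pmf_embed_pmf) (use nb_nonneg[OF assms] in auto)
qed

lemma nn_nb:
  assumes "r > 0" "0 < p" "p < 1"
    and g: "\<And>n. 0 \<le> g n" and s: "(\<lambda>n. g n * nb_mass r p n) sums s"
  shows "(\<integral>\<^sup>+n. ennreal (g n) \<partial>measure_pmf (neg_binomial_pmf r p)) = ennreal s"
proof -
  have "(\<integral>\<^sup>+n. ennreal (g n) \<partial>measure_pmf (neg_binomial_pmf r p))
      = (\<integral>\<^sup>+n. ennreal (g n * nb_mass r p n) \<partial>count_space UNIV)"
    by (simp add: nn_integral_measure_pmf pmf_nb[OF assms(1-3)] ennreal_mult'' nb_nonneg[OF assms(1-3)] g mult.commute)
  also have "\<dots> = ennreal s"
    using s g nb_nonneg[OF assms(1-3)]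
    by (simp add: nn_integral_count_space_nat suminf_ennreal2 sums_summable sums_unique[symmetric])
  finally show ?thesis .
qed

lemma nn_unif:
  fixes f :: "nat \<Rightarrow> real"
  assumes "\<And>x. 0 \<le> f x"
  shows "(\<integral>\<^sup>+x. ennreal (f x) \<partial>measure_pmf (pmf_of_set {0..n})) = ennreal ((\<Sum>x=0..n. f x) / (real n + 1))"
proof -
  have "(\<integral>\<^sup>+x. ennreal (f x) \<partial>measure_pmf (pmf_of_set {0..n})) = (\<Sum>x=0..n. ennreal (f x)) / of_nat (Suc n)"
    by (subst nn_integral_pmf_of_set) auto
  also have "\<dots> = ennreal (\<Sum>x=0..n. f x) / ennreal (real n + 1)"
    using assms by (simp add: sum_ennreal ennreal_of_nat_eq_real_of_nat add.commute)
  also have "\<dots> = ennreal ((\<Sum>x=0..n. f x) / (real n + 1))"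
    using assms by (intro divide_ennreal) (auto intro: sum_nonneg)
  finally show ?thesis .
qed

lemma sum1: "(\<Sum>x=0..n. real x) = real n * (real n + 1) / 2"
  by (induction n) (auto simp: field_simps)

lemma sum2: "(\<Sum>x=0..n. real x ^ 2) = real n * (real n + 1) * (2 * real n + 1) / 6"
  by (induction n) (auto simp: field_simps power2_eq_square)

lemma sum1': "(\<Sum>x=0..n. real x) / (real n + 1) = real n / 2"
proof -
  have "real n + 1 > 0" by simp
  then show ?thesis unfolding sum1 by (simp add: field_simps)
qed

lemma sum2': "(\<Sum>x=0..n. real x ^ 2) / (real n + 1) = real n * (2 * real n + 1) / 6"
proof -
  have "real n + 1 > 0" by simp
  then show ?thesis unfolding sum2 by (simp add: field_simps)
qed

theorem mainTheorem8:
  fixes r p q :: real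
  assumes "r > 0" and "0 < p" and "p < 1" and "q = 1 - p"
  shows "measure_pmf.expectation (unb_pmf r p) real = r * q / (2 * p)
     \<and> measure_pmf.variance (unb_pmf r p) real
         = r * q / (12 * p) * (6 + 4 * q / p + r * q / p)
     \<and> measure_pmf.variance (unb_pmf r p) real / measure_pmf.expectation (unb_pmf r p) real
         = 1 + 4 * q / (6 * p) + r * q / (6 * p)
     \<and> measure_pmf.variance (unb_pmf r p) real / measure_pmf.expectation (unb_pmf r p) real > 1"
proof -
  note rp = assms(1-3)
  define U where "U = unb_pmf r p"
  define E1 where "E1 = r * q / (2 * p)"
  define E2 where "E2 = (2 * (r * (r + 1) * q^2 / p^2) + 3 * (r * q / p)) / 6"
  have m1: "(\<integral>\<^sup>+x. ennreal (real x) \<partial>measure_pmf U) = ennreal E1"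
  proof -
    have "(\<integral>\<^sup>+x. ennreal (real x) \<partial>measure_pmf U)
        = (\<integral>\<^sup>+n. ennreal (real n / 2) \<partial>measure_pmf (neg_binomial_pmf r p))"
      unfolding U_def unb_pmf_def nn_integral_bind_pmf
      by (intro nn_integral_cong) (simp add: nn_unif sum1')
    also have "\<dots> = ennreal E1"
    proof (rule nn_nb[OF rp])
      show "(\<lambda>n. real n / 2 * nb_mass r p n) sums E1"
        using sums_mult[OF nb_sums(2)[OF rp], of "1/2"] unfolding E1_def assms(4)
        by (simp add: field_simps)
    qed simp
    finally show ?thesis .
  qed
  have m2: "(\<integral>\<^sup>+x. ennreal ((real x)^2) \<partial>measure_pmf U) = ennreal E2"
  proof -
    have "(\<integral>\<^sup>+x. ennreal ((real x)^2) \<partial>measure_pmf U)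
        = (\<integral>\<^sup>+n. ennreal (real n * (2 * real n + 1) / 6) \<partial>measure_pmf (neg_binomial_pmf r p))"
      unfolding U_def unb_pmf_def nn_integral_bind_pmf
      by (intro nn_integral_cong) (simp add: nn_unif sum2')
    also have "\<dots> = ennreal E2"
    proof (rule nn_nb[OF rp])
      have "(\<lambda>n. (2 * (real n * (real n - 1) * nb_mass r p n) + 3 * (real n * nb_mass r p n)) / 6) sums E2"
        unfolding E2_def assms(4)
        by (intro sums_divide sums_add sums_mult nb_sums[OF rp])
      moreover have "(2 * (real n * (real n - 1) * nb_mass r p n) + 3 * (real n * nb_mass r p n)) / 6
          = real n * (2 * real n + 1) / 6 * nb_mass r p n" for n
        by (simp add: field_simps)
      ultimately show "(\<lambda>n. real n * (2 * real n + 1) / 6 * nb_mass r p n) sums E2" by simp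
    qed simp
    finally show ?thesis .
  qed
  have i1: "integrable (measure_pmf U) real"
    by (rule integrableI_nn_integral_finite[OF _ _ m1]) auto
  have i2: "integrable (measure_pmf U) (\<lambda>x. (real x)^2)"
    by (rule integrableI_nn_integral_finite[OF _ _ m2]) auto
  have x1: "measure_pmf.expectation U real = E1"
  proof -
    have "E1 \<ge> 0" unfolding E1_def assms(4) using rp by simp
    then show ?thesis using m1 by (subst integral_eq_nn_integral) auto
  qed
  have x2: "measure_pmf.expectation U (\<lambda>x. (real x)^2) = E2"
  proof -
    have "E2 \<ge> 0" unfolding E2_def assms(4) using rp by simp
    then show ?thesis using m2 by (subst integral_eq_nn_integral) auto
  qed
  have v: "measure_pmf.variance U real = E2 - E1^2"
    using measure_pmf.variance_eq[OF i1 i2] x1 x2 by simp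
  have qp: "q > 0" using assms by simp
  have V: "E2 - E1^2 = r * q / (12 * p) * (6 + 4 * q / p + r * q / p)"
    unfolding E1_def E2_def using rp by (simp add: field_simps power2_eq_square)
  have R: "(E2 - E1^2) / E1 = 1 + 4 * q / (6 * p) + r * q / (6 * p)"
    unfolding V unfolding E1_def using rp qp by (simp add: field_simps)
  have G: "1 + 4 * q / (6 * p) + r * q / (6 * p) > 1"
    using rp qp by (simp add: add_pos_pos)
  have VV: "measure_pmf.variance U real = r * q / (12 * p) * (6 + 4 * q / p + r * q / p)"
    using v V by simp
  have RR: "measure_pmf.variance U real / measure_pmf.expectation U real = 1 + 4 * q / (6 * p) + r * q / (6 * p)"
    using v R x1 by simp
  show ?thesis
    unfolding U_def[symmetric] using VV RR G x1 unfolding E1_def by simp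
qed

end
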